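(* Let $N_{\rm S}\ge0$, $r=\sinh^{-1}\sqrt{N_{\rm S}}$, $\kappa\ge0$, $n_{\rm B}\ge\max\{\kappa-1,0\}$. Let the two-mode squeezed vacuum $\hat S_2(r)|0\rangle_S|0\rangle_A$ be prepared and mode $S$ sent through $\mathcal N_{\kappa,n_{\rm B}}$ (output mode $R$), while $A$ is kept noiselessly. Perform a Bell measurement: interfere $R$ and $A$ on a balanced beamsplitter and homodyne the $\hat p$ quadrature of one output port and the $\hat q$ quadrature of the other. The classical Fisher information with respect to $n_{\rm B}$ of the joint outcome is $$\mathcal I_{\rm Bell}=\frac{1}{\Big(n_{\rm B}+\kappa N_{\rm S}-2\sqrt{\kappa N_{\rm S}(N_{\rm S}+1)}+N_{\rm S}+1\Big)^2}.$$
   Context: $\hat S_2(r)=\exp[-r(\hat a_S\hat a_A-\hat a_S^\dagger\hat a_A^\dagger)]$; the signal mode of $\hat S_2(r)|0,0\rangle$ has mean photon number $\sinh^2r$. Quadratures are $\hat q=\hat a+\hat a^\dagger$, $\hat p=-i(\hat a-\hat a^\dagger)$ (vacuum covariance is the identity). $\mathcal N_{\kappa,n_{\rm B}}$ is the single-mode phase-covariant bosonic Gaussian channel mapping quadrature mean $\bar x\mapsto\sqrt\kappa\,\bar x$ and covariance $V\mapsto\kappa V+(2n_{\rm B}+1-\kappa)I_2$. Classical Fisher information of an outcome density $p(x|\theta)$ is $\int(\partial_\theta\log p)^2p\,dx$. *)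

theory Defs
  imports "HOL-Analysis.Analysis"
begin

text \<open>Quadrature ordering of a two-mode system:
  index 0 = q of mode 1, 1 = p of mode 1, 2 = q of mode 2, 3 = p of mode 2.
  Covariance matrices (vacuum = identity) are represented as functions nat => nat => real,
  meaningful for indices below 4. All first moments stay zero throughout.\<close>

definition mat4_mult :: "(nat \<Rightarrow> nat \<Rightarrow> real) \<Rightarrow> (nat \<Rightarrow> nat \<Rightarrow> real) \<Rightarrow> nat \<Rightarrow> nat \<Rightarrow> real" where
  "mat4_mult A B i j = (\<Sum>k<4. A i k * B k j)"

definition mat4_transpose :: "(nat \<Rightarrow> nat \<Rightarrow> real) \<Rightarrow> nat \<Rightarrow> nat \<Rightarrow> real" where
  "mat4_transpose A i j = A j i"

text \<open>Covariance matrix of the two-mode squeezed vacuum S_2(r)|0,0>, modes (S, A).\<close>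
definition tmsv_cov :: "real \<Rightarrow> nat \<Rightarrow> nat \<Rightarrow> real" where
  "tmsv_cov r i j =
     (if i = j then cosh (2 * r)
      else if (i = 0 \<and> j = 2) \<or> (i = 2 \<and> j = 0) then sinh (2 * r)
      else if (i = 1 \<and> j = 3) \<or> (i = 3 \<and> j = 1) then - sinh (2 * r)
      else 0)"

text \<open>The channel N_{kappa,nB} acting on the first mode (S), identity on the second (A):
  V |-> X V X^T + Y with X = sqrt kappa I_2 (+) I_2, Y = (2 nB + 1 - kappa) I_2 (+) 0.\<close>
definition channel_on_first :: "real \<Rightarrow> real \<Rightarrow> (nat \<Rightarrow> nat \<Rightarrow> real) \<Rightarrow> nat \<Rightarrow> nat \<Rightarrow> real" where
  "channel_on_first \<kappa> nB V i j =
     (let s = (\<lambda>k::nat. if k < 2 then sqrt \<kappa> else 1) in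
      s i * V i j * s j + (if i = j \<and> i < 2 then 2 * nB + 1 - \<kappa> else 0))"

text \<open>Balanced beamsplitter on modes (R, A): output modes c = (R + A)/sqrt 2, d = (R - A)/sqrt 2.
  Symplectic matrix acting on (q_R, p_R, q_A, p_A), giving (q_c, p_c, q_d, p_d).\<close>
definition bs_mat :: "nat \<Rightarrow> nat \<Rightarrow> real" where
  "bs_mat i j =
     (if i = 0 then (if j = 0 \<or> j = 2 then 1 / sqrt 2 else 0)
      else if i = 1 then (if j = 1 \<or> j = 3 then 1 / sqrt 2 else 0)
      else if i = 2 then (if j = 0 then 1 / sqrt 2 else if j = 2 then - 1 / sqrt 2 else 0)
      else if i = 3 then (if j = 1 then 1 / sqrt 2 else if j = 3 then - 1 / sqrt 2 else 0)
      else 0)"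

definition symplectic_action :: "(nat \<Rightarrow> nat \<Rightarrow> real) \<Rightarrow> (nat \<Rightarrow> nat \<Rightarrow> real) \<Rightarrow> nat \<Rightarrow> nat \<Rightarrow> real" where
  "symplectic_action S V = mat4_mult (mat4_mult S V) (mat4_transpose S)"

definition bell_output_cov :: "real \<Rightarrow> real \<Rightarrow> real \<Rightarrow> nat \<Rightarrow> nat \<Rightarrow> real" where
  "bell_output_cov r \<kappa> nB = symplectic_action bs_mat (channel_on_first \<kappa> nB (tmsv_cov r))"

text \<open>Density of a centred bivariate Gaussian with covariance [[a, b], [c, d]].\<close>
definition gauss2_density :: "real \<Rightarrow> real \<Rightarrow> real \<Rightarrow> real \<Rightarrow> real \<times> real \<Rightarrow> real" where
  "gauss2_density a b c d z =
     (let D = a * d - b * c; x = fst z; y = snd z in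
      exp (- (d * x\<^sup>2 - (b + c) * x * y + a * y\<^sup>2) / (2 * D)) / (2 * pi * sqrt D))"

text \<open>Joint outcome density of the Bell measurement: homodyne of p on port c (index 1)
  and of q on port d (index 2); outcome z = (p_c, q_d).\<close>
definition bell_density :: "real \<Rightarrow> real \<Rightarrow> real \<Rightarrow> real \<times> real \<Rightarrow> real" where
  "bell_density r \<kappa> nB z =
     (let W = bell_output_cov r \<kappa> nB in gauss2_density (W 1 1) (W 1 2) (W 2 1) (W 2 2) z)"

definition bell_fisher :: "real \<Rightarrow> real \<Rightarrow> real \<Rightarrow> real" where
  "bell_fisher r \<kappa> nB =
     (\<integral>z. (deriv (\<lambda>t. ln (bell_density r \<kappa> t z)) nB)\<^sup>2 * bell_density r \<kappa> nB z \<partial>(lborel :: (real \<times> real) measure))"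

end

theory Submission imports Defs "HOL-Probability.Probability" begin

lemma prod_integrable:
  fixes f g :: "real \<Rightarrow> real"
  assumes f: "integrable lborel f" and g: "integrable lborel g"
  shows "integrable (lborel \<Otimes>\<^sub>M lborel) (\<lambda>(x,y). f x * g y)"
proof (rule integrableI_bounded)
  have [measurable]: "f \<in> borel_measurable borel" "g \<in> borel_measurable borel"
    using f g by auto
  show "(\<lambda>(x,y). f x * g y) \<in> borel_measurable (lborel \<Otimes>\<^sub>M lborel)" by measurable
  have "(\<integral>\<^sup>+x. \<integral>\<^sup>+y. ennreal (norm (f x)) * ennreal (norm (g y)) \<partial>lborel \<partial>lborel)
      = (\<integral>\<^sup>+x. \<integral>\<^sup>+y. (\<lambda>z. ennreal (norm ((\<lambda>(x,y). f x * g y) z))) (x,y) \<partial>lborel \<partial>lborel)"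
    by (simp add: abs_mult ennreal_mult)
  also have "\<dots> = (\<integral>\<^sup>+z. ennreal (norm ((\<lambda>(x,y). f x * g y) z)) \<partial>(lborel \<Otimes>\<^sub>M lborel))"
    by (rule sigma_finite_measure.nn_integral_fst[OF lborel.sigma_finite_measure_axioms,
          of "\<lambda>z. ennreal (norm ((\<lambda>(x,y). f x * g y) z))" lborel]) measurable
  finally have "(\<integral>\<^sup>+z. ennreal (norm ((\<lambda>(x,y). f x * g y) z)) \<partial>(lborel \<Otimes>\<^sub>M lborel))
      = (\<integral>\<^sup>+x. \<integral>\<^sup>+y. ennreal (norm (f x)) * ennreal (norm (g y)) \<partial>lborel \<partial>lborel)" ..
  also have "\<dots> = (\<integral>\<^sup>+x. ennreal (norm (f x)) * (\<integral>\<^sup>+y. ennreal (norm (g y)) \<partial>lborel) \<partial>lborel)"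
    by (simp add: nn_integral_cmult)
  also have "\<dots> = (\<integral>\<^sup>+x. ennreal (norm (f x)) \<partial>lborel) * (\<integral>\<^sup>+y. ennreal (norm (g y)) \<partial>lborel)"
    by (simp add: nn_integral_multc)
  also have "\<dots> < \<infinity>"
  proof -
    have "(\<integral>\<^sup>+x. ennreal (norm (f x)) \<partial>lborel) < \<infinity>" "(\<integral>\<^sup>+y. ennreal (norm (g y)) \<partial>lborel) < \<infinity>"
      using f g unfolding integrable_iff_bounded by auto
    then show ?thesis by (simp add: ennreal_mult_less_top)
  qed
  finally show "(\<integral>\<^sup>+z. ennreal (norm ((\<lambda>(x,y). f x * g y) z)) \<partial>(lborel \<Otimes>\<^sub>M lborel)) < \<infinity>" .
qed

lemma prod_integral:
  fixes f g :: "real \<Rightarrow> real"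
  assumes f: "integrable lborel f" and g: "integrable lborel g"
  shows "integral\<^sup>L (lborel \<Otimes>\<^sub>M lborel) (\<lambda>(x,y). f x * g y) = integral\<^sup>L lborel f * integral\<^sup>L lborel g"
proof -
  have "integral\<^sup>L (lborel \<Otimes>\<^sub>M lborel) (\<lambda>(x,y). f x * g y) = (\<integral>x. (\<integral>y. f x * g y \<partial>lborel) \<partial>lborel)"
    using lborel_pair.integral_fst[OF prod_integrable[OF f g]] by simp
  also have "\<dots> = (\<integral>x. f x * integral\<^sup>L lborel g \<partial>lborel)" by simp
  also have "\<dots> = integral\<^sup>L lborel f * integral\<^sup>L lborel g" by simp
  finally show ?thesis .
qed

lemma prod_hbi:
  fixes f g :: "real \<Rightarrow> real"
  assumes f: "integrable lborel f" and g: "integrable lborel g"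
  shows "has_bochner_integral (lborel \<Otimes>\<^sub>M lborel) (\<lambda>z. f (fst z) * g (snd z))
           (integral\<^sup>L lborel f * integral\<^sup>L lborel g)"
proof -
  have e: "(\<lambda>z. f (fst z) * g (snd z)) = (\<lambda>(x,y). f x * g y)" by auto
  show ?thesis unfolding e
    using prod_integrable[OF f g] prod_integral[OF f g]
    by (simp add: has_bochner_integral_iff)
qed

lemma fisher_gauss:
  fixes v :: real
  assumes v: "v > 0"
  shows "(\<integral>z. ((fst z ^ 2 + snd z ^ 2) / (2 * v ^ 2) - 1 / v) ^ 2 *
            (exp (- (fst z ^ 2 + snd z ^ 2) / (2 * v)) / (2 * pi * v)) \<partial>(lborel :: (real \<times> real) measure))
         = 1 / v ^ 2"
proof -
  define \<phi> where "\<phi> = normal_density 0 (sqrt v)"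
  have sv: "sqrt v > 0" using v by simp
  define A where "A = (\<lambda>x. \<phi> x * x ^ 4)"
  define B where "B = (\<lambda>x. \<phi> x * x ^ 2)"
  have iA: "integrable lborel A" unfolding A_def \<phi>_def
    using integrable_normal_moment[where \<mu>=0 and \<sigma>="sqrt v" and k=4] v by simp
  have iB: "integrable lborel B" unfolding B_def \<phi>_def
    using integrable_normal_moment[where \<mu>=0 and \<sigma>="sqrt v" and k=2] v by simp
  have iC: "integrable lborel \<phi>" unfolding \<phi>_def
    using integrable_normal_density[where \<mu>=0 and \<sigma>="sqrt v"] v by simp
  have mA: "integral\<^sup>L lborel A = 3 * v ^ 2"
  proof -
    have e: "A = (\<lambda>x. normal_density 0 (sqrt v) x * (x - 0) ^ (2 * 2))"
      unfolding A_def \<phi>_def by simp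
    have r: "(fact (2 * 2) / ((2 / (sqrt v)\<^sup>2) ^ 2 * fact 2) :: real) = 3 * v ^ 2"
      using v by (simp add: fact_numeral power2_eq_square divide_simps)
    show ?thesis unfolding e using integral_normal_moment_even[where \<mu>=0 and \<sigma>="sqrt v" and k=2] sv r by simp
  qed
  have mB: "integral\<^sup>L lborel B = v"
  proof -
    have e: "B = (\<lambda>x. normal_density 0 (sqrt v) x * (x - 0) ^ (2 * 1))"
      unfolding B_def \<phi>_def by simp
    have r: "(fact (2 * 1) / ((2 / (sqrt v)\<^sup>2) ^ 1 * fact 1) :: real) = v"
      using v by simp
    show ?thesis unfolding e using integral_normal_moment_even[where \<mu>=0 and \<sigma>="sqrt v" and k=1] sv r by simp
  qed
  have mC: "integral\<^sup>L lborel \<phi> = 1" unfolding \<phi>_def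
    using integral_normal_density[where \<mu>=0 and \<sigma>="sqrt v"] v by simp
  have phi: "\<phi> x = exp (- (x ^ 2) / (2 * v)) / sqrt (2 * pi * v)" for x
    unfolding \<phi>_def normal_density_def using v by simp
  have sq: "sqrt (2 * pi * v) * sqrt (2 * pi * v) = 2 * pi * v" using v by simp
  have pp: "\<phi> x * \<phi> y = exp (- (x ^ 2 + y ^ 2) / (2 * v)) / (2 * pi * v)" for x y
  proof -
    have "\<phi> x * \<phi> y = exp (- (x ^ 2) / (2 * v)) * exp (- (y ^ 2) / (2 * v)) / (sqrt (2 * pi * v) * sqrt (2 * pi * v))"
      by (simp add: phi)
    also have "\<dots> = exp (- (x ^ 2) / (2 * v) + - (y ^ 2) / (2 * v)) / (2 * pi * v)"
      by (simp only: sq exp_add)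
    also have "- (x ^ 2) / (2 * v) + - (y ^ 2) / (2 * v) = - (x ^ 2 + y ^ 2) / (2 * v)"
      by (simp add: diff_divide_distrib)
    finally show ?thesis .
  qed
  define c4 where "c4 = 1 / (4 * v ^ 4)"
  define c2 where "c2 = 1 / v ^ 3"
  define c0 where "c0 = 1 / v ^ 2"
  have h1: "has_bochner_integral (lborel \<Otimes>\<^sub>M lborel) (\<lambda>z. A (fst z) * \<phi> (snd z)) (3 * v^2 * 1)"
    using prod_hbi[OF iA iC] mA mC by simp
  have h2: "has_bochner_integral (lborel \<Otimes>\<^sub>M lborel) (\<lambda>z. \<phi> (fst z) * A (snd z)) (1 * (3 * v^2))"
    using prod_hbi[OF iC iA] mA mC by simp
  have h3: "has_bochner_integral (lborel \<Otimes>\<^sub>M lborel) (\<lambda>z. B (fst z) * B (snd z)) (v * v)"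
    using prod_hbi[OF iB iB] mB by simp
  have h4: "has_bochner_integral (lborel \<Otimes>\<^sub>M lborel) (\<lambda>z. B (fst z) * \<phi> (snd z)) (v * 1)"
    using prod_hbi[OF iB iC] mB mC by simp
  have h5: "has_bochner_integral (lborel \<Otimes>\<^sub>M lborel) (\<lambda>z. \<phi> (fst z) * B (snd z)) (1 * v)"
    using prod_hbi[OF iC iB] mB mC by simp
  have h6: "has_bochner_integral (lborel \<Otimes>\<^sub>M lborel) (\<lambda>z. \<phi> (fst z) * \<phi> (snd z)) (1 * 1)"
    using prod_hbi[OF iC iC] mC by simp
  have H: "has_bochner_integral (lborel \<Otimes>\<^sub>M lborel)
     (\<lambda>z. c4 * (A (fst z) * \<phi> (snd z)) + c4 * (\<phi> (fst z) * A (snd z)) + 2 * c4 * (B (fst z) * B (snd z))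
          - c2 * (B (fst z) * \<phi> (snd z)) - c2 * (\<phi> (fst z) * B (snd z)) + c0 * (\<phi> (fst z) * \<phi> (snd z)))
     (c4 * (3 * v^2 * 1) + c4 * (1 * (3 * v^2)) + 2 * c4 * (v * v) - c2 * (v * 1) - c2 * (1 * v) + c0 * (1 * 1))"
    by (intro has_bochner_integral_add has_bochner_integral_diff has_bochner_integral_mult_right h1 h2 h3 h4 h5 h6)
  have val: "c4 * (3 * v^2 * 1) + c4 * (1 * (3 * v^2)) + 2 * c4 * (v * v) - c2 * (v * 1) - c2 * (1 * v) + c0 * (1 * 1) = 1 / v^2"
    unfolding c4_def c2_def c0_def using v by (simp add: field_simps power2_eq_square power3_eq_cube power4_eq_xxxx)
  have pw: "((fst z ^ 2 + snd z ^ 2) / (2 * v ^ 2) - 1 / v) ^ 2 *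
            (exp (- (fst z ^ 2 + snd z ^ 2) / (2 * v)) / (2 * pi * v)) =
     c4 * (A (fst z) * \<phi> (snd z)) + c4 * (\<phi> (fst z) * A (snd z)) + 2 * c4 * (B (fst z) * B (snd z))
          - c2 * (B (fst z) * \<phi> (snd z)) - c2 * (\<phi> (fst z) * B (snd z)) + c0 * (\<phi> (fst z) * \<phi> (snd z))" for z
  proof -
    have "c4 * (A (fst z) * \<phi> (snd z)) + c4 * (\<phi> (fst z) * A (snd z)) + 2 * c4 * (B (fst z) * B (snd z))
          - c2 * (B (fst z) * \<phi> (snd z)) - c2 * (\<phi> (fst z) * B (snd z)) + c0 * (\<phi> (fst z) * \<phi> (snd z))
       = (c4 * (fst z ^ 4 + snd z ^ 4 + 2 * fst z^2 * snd z^2) - c2 * (fst z^2 + snd z^2) + c0) * (\<phi> (fst z) * \<phi> (snd z))"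
      unfolding A_def B_def by (simp add: algebra_simps)
    also have "\<dots> = ((fst z ^ 2 + snd z ^ 2) / (2 * v ^ 2) - 1 / v) ^ 2 * (\<phi> (fst z) * \<phi> (snd z))"
      unfolding c4_def c2_def c0_def using v by (simp add: field_simps power2_eq_square power3_eq_cube power4_eq_xxxx)
    finally show ?thesis unfolding pp by simp
  qed
  show ?thesis
    using has_bochner_integral_integral_eq[OF H] unfolding val lborel_prod pw[symmetric] by simp
qed

lemma cov_entries:
  assumes "\<kappa> \<ge> 0"
  shows "bell_output_cov r \<kappa> nB 1 1 = (\<kappa> * cosh (2*r) + 2*nB + 1 - \<kappa> + cosh (2*r) - 2 * sqrt \<kappa> * sinh (2*r)) / 2"
    and "bell_output_cov r \<kappa> nB 2 2 = (\<kappa> * cosh (2*r) + 2*nB + 1 - \<kappa> + cosh (2*r) - 2 * sqrt \<kappa> * sinh (2*r)) / 2"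
    and "bell_output_cov r \<kappa> nB 1 2 = 0"
    and "bell_output_cov r \<kappa> nB 2 1 = 0"
  using assms
  by (simp_all add: bell_output_cov_def symplectic_action_def mat4_mult_def mat4_transpose_def
      lessThan_nat_numeral bs_mat_def channel_on_first_def tmsv_cov_def field_simps)

lemma aux_div: "(u::real) * 2 / ((2 * a + 2 * b) * (2 * a + 2 * b)) = u / (2 * (a + b)\<^sup>2)"
proof -
  have e: "2 * a + 2 * b = 2 * (a + b)" by simp
  have f: "(2 * (a + b)) * (2 * (a + b)) = 2 * (2 * (a + b)\<^sup>2)" by (simp add: power2_eq_square algebra_simps)
  show ?thesis unfolding e f by simp
qed

theorem mainTheorem7:
  fixes NS \<kappa> nB r :: real
  assumes "NS \<ge> 0" and "\<kappa> \<ge> 0" and "nB \<ge> max (\<kappa> - 1) 0"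
    and "r = arsinh (sqrt NS)"
  shows "bell_fisher r \<kappa> nB =
           1 / (nB + \<kappa> * NS - 2 * sqrt (\<kappa> * NS * (NS + 1)) + NS + 1)\<^sup>2"
proof -
  have NS: "NS \<ge> 0" and ka: "\<kappa> \<ge> 0" and nBk: "nB \<ge> \<kappa> - 1" and nB0: "nB \<ge> 0"
    using assms by auto
  have sr: "sinh r = sqrt NS" using assms(4) by simp
  have cr: "cosh r = sqrt (NS + 1)" using assms(4) NS by (simp add: cosh_arsinh_real)
  have c2: "cosh (2 * r) = 2 * NS + 1"
    using NS by (simp add: cosh_double sr cr)
  have s2: "sinh (2 * r) = 2 * sqrt NS * sqrt (NS + 1)"
    by (simp add: sinh_double sr cr)
  define K where "K = \<kappa> * NS + NS + 1 - 2 * sqrt (\<kappa> * NS * (NS + 1))"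
  have sqm: "sqrt (\<kappa> * NS * (NS + 1)) = sqrt \<kappa> * sqrt NS * sqrt (NS + 1)"
    by (simp add: real_sqrt_mult)
  have W11: "bell_output_cov r \<kappa> t 1 1 = t + K" for t
    unfolding cov_entries(1)[OF ka] c2 s2 K_def sqm by (simp add: field_simps)
  have W22: "bell_output_cov r \<kappa> t 2 2 = t + K" for t
    unfolding cov_entries(2)[OF ka] c2 s2 K_def sqm by (simp add: field_simps)
  have W12: "bell_output_cov r \<kappa> t 1 2 = 0" and W21: "bell_output_cov r \<kappa> t 2 1 = 0" for t
    using cov_entries(3,4)[OF ka] by auto
  have Ksq: "K = (sqrt (\<kappa> * NS) - sqrt (NS + 1))\<^sup>2"
  proof -
    have e1: "sqrt (\<kappa> * NS * (NS + 1)) = sqrt (\<kappa> * NS) * sqrt (NS + 1)"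
      by (simp only: real_sqrt_mult)
    have e2: "(sqrt (\<kappa> * NS))\<^sup>2 = \<kappa> * NS" using NS ka by simp
    have e3: "(sqrt (NS + 1))\<^sup>2 = NS + 1" using NS by simp
    show ?thesis unfolding K_def e1 power2_diff e2 e3 by simp
  qed
  define v where "v = nB + K"
  have vpos: "v > 0"
  proof (cases "\<kappa> \<le> 1")
    case True
    have "\<kappa> * NS \<le> NS" using mult_right_mono[OF True NS] by simp
    then have "sqrt (\<kappa> * NS) < sqrt (NS + 1)" by simp
    then have "K > 0" unfolding Ksq by simp
    then show ?thesis unfolding v_def using nB0 by simp
  next
    case False
    then have "nB > 0" using nBk by simp
    moreover have "K \<ge> 0" unfolding Ksq by simp
    ultimately show ?thesis unfolding v_def by simp
  qed
  have dens: "bell_density r \<kappa> t z = exp (- (fst z ^ 2 + snd z ^ 2) / (2 * (t + K))) / (2 * pi * (t + K))"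
    if "t + K > 0" for t z
  proof -
    define w where "w = t + K"
    have wp: "w > 0" using that unfolding w_def .
    have a: "- (w * (fst z)\<^sup>2 - (0 + 0) * fst z * snd z + w * (snd z)\<^sup>2) / (2 * (w * w - 0 * 0))
           = - ((fst z)\<^sup>2 + (snd z)\<^sup>2) / (2 * w)"
      using wp by (simp add: field_simps power2_eq_square)
    have b: "sqrt (w * w - 0 * 0) = w" using wp by simp
    show ?thesis
      unfolding bell_density_def gauss2_density_def Let_def W11 W22 W12 W21 w_def[symmetric]
      by (simp only: a b prod.sel)
  qed
  have der: "deriv (\<lambda>t. ln (bell_density r \<kappa> t z)) nB
        = (fst z ^ 2 + snd z ^ 2) / (2 * v ^ 2) - 1 / v" for z
  proof -
    define u where "u = fst z ^ 2 + snd z ^ 2"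
    define g where "g = (\<lambda>t. - u / (2 * (t + K)) - ln (2 * pi) - ln (t + K))"
    have eq: "ln (bell_density r \<kappa> t z) = g t" if "t \<in> {-K<..}" for t
    proof -
      have tp: "t + K > 0" using that by simp
      have "ln (bell_density r \<kappa> t z) = ln (exp (- u / (2 * (t + K)))) - ln (2 * pi * (t + K))"
        unfolding dens[OF tp] u_def using tp by (simp add: ln_div)
      also have "\<dots> = g t" unfolding g_def using tp by (simp add: ln_mult)
      finally show ?thesis .
    qed
    have "(g has_field_derivative (u / (2 * (nB + K) ^ 2) - 1 / (nB + K))) (at nB)"
      unfolding g_def using vpos unfolding v_def
      by (auto intro!: derivative_eq_intros simp: aux_div)
    then have "((\<lambda>t. ln (bell_density r \<kappa> t z)) has_field_derivative (u / (2 * v ^ 2) - 1 / v)) (at nB)"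
      unfolding v_def
      by (rule has_field_derivative_transform_within_open[where S="{-K<..}"])
         (use vpos eq in \<open>auto simp: v_def\<close>)
    then show ?thesis unfolding u_def by (rule DERIV_imp_deriv)
  qed
  have "bell_fisher r \<kappa> nB = (\<integral>z. ((fst z ^ 2 + snd z ^ 2) / (2 * v ^ 2) - 1 / v) ^ 2 *
            (exp (- (fst z ^ 2 + snd z ^ 2) / (2 * v)) / (2 * pi * v)) \<partial>(lborel :: (real \<times> real) measure))"
    unfolding bell_fisher_def der using vpos unfolding v_def by (simp add: dens)
  also have "\<dots> = 1 / v ^ 2" by (rule fisher_gauss[OF vpos])
  finally show ?thesis unfolding v_def K_def by (simp add: algebra_simps)
qed

end
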